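(* Let $\mathcal{G}$ be a tomographically local GPT and let $\hat{\xi}:\mathcal{G}\to\mathbf{QuasiSubStoch}$ be a quasiprobabilistic model of $\mathcal{G}$. Then for each system $A$ of $\mathcal{G}$ there is an invertible linear map $\chi_A:A\to\mathbb{R}^{\Lambda_A}$ (where $\hat\xi(A)=\mathbb{R}^{\Lambda_A}$) such that for every process $T:A\to B$ of $\mathcal{G}$, $$\hat{\xi}(T)=\chi_B\circ T\circ\chi_A^{-1},$$ and moreover $\mathbf{1}_{\Lambda_A}\circ\chi_A=u_A$, where $\mathbf{1}_{\Lambda_A}$ is the all-ones covector on $\mathbb{R}^{\Lambda_A}$ and $u_A$ is the deterministic effect of $A$.
   Context: A process theory consists of systems (closed under a composition $A\otimes B$, with a trivial system $I$) and processes $T:A\to B$, closed under sequential composition $\circ$ and parallel composition $\otimes$ and containing identities; processes $I\to A$ are states, $A\to I$ effects, $I\to I$ scalars. $\mathbf{RLinear}$ is the process theory of finite-dimensional real vector spaces (composite $=$ tensor product, trivial system $\mathbb{R}$) and linear maps. $\mathbf{QuasiSubStoch}$ is the sub-process theory of $\mathbf{RLinear}$ whose systems are the spaces $\mathbb{R}^\Lambda$ of real functions on finite sets $\Lambda$ (with $\mathbb{R}^{\Lambda}\otimes\mathbb{R}^{\Lambda'}=\mathbb{R}^{\Lambda\times\Lambda'}$ and trivial system $\mathbb{R}^{\{*\}}=\mathbb{R}$), and whose processes $\mathbb{R}^\Lambda\to\mathbb{R}^{\Lambda'}$ are linear maps given by real matrices $f(\lambda'|\lambda)$ (quasi-substochastic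 maps; no positivity is required). The all-ones covector $\mathbf{1}_\Lambda:\mathbb{R}^\Lambda\to\mathbb{R}$ is $v\mapsto\sum_{\lambda}v(\lambda)$. A tomographically local GPT is here a sub-process theory $\mathcal{G}$ of $\mathbf{RLinear}$ (closed under $\circ$, $\otimes$, containing identities) such that: each system $A$ is a finite-dimensional real vector space and composites are tensor products; the states of $A$ span $A$ and the effects on $A$ span $A^*$; every scalar lies in $[0,1]$; for each type the set of processes is closed under convex combinations; each system $A$ has a distinguished deterministic effect $u_A$ with $u_{A\otimes B}=u_A\otimes u_B$. A quasiprobabilistic model of $\mathcal{G}$ is a map $\hat\xi:\mathcal{G}\to\mathbf{QuasiSubStoch}$ that is diagram-preserving (it assigns to each system $A$ a space $\mathbb{R}^{\Lambda_A}$, with $\hat\xi(A\otimes B)=\mathbb{R}^{\Lambda_A}\otimes\mathbb{R}^{\Lambda_B}$ and $\hat\xi(I)=\mathbb{R}$, and to each process $T:A\to B$ a quasi-substochastic map $\hat\xi(T):\mathbb{R}^{\Lambda_A}\to\mathbb{R}^{\Lambda_B}$, preserving $\circ$, $\otimes$ and identities) and satisfies: (1) $\hat\xi(u_A)=\mathbf{1}_{\Lambda_A}$ for each system $A$; (2) $\hat\xi(s)=s$ for every scalar $s$ (empirical adequacy); (3) whenever a process $T$ is a convex combination $\sum_i\omega_iT_i$ of processes of the same type, $\hat\xi(T)=\sum_i\omega_i\hat\xi(T_i)$, and whenever an effect is a coarse-graining (sum) of effects, its image is the sum of their images. *)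

theory Defs
  imports Complex_Main
begin

text \<open>A linear map R^n -> R^m is represented (w.r.t. the
standard bases) by a real matrix, encoded as a function  nat => nat => real  (row, column)
that vanishes outside the index range  {0..<m} x {0..<n}.  A system of dimension d
is thus realised as R^d, and R^{Lambda} for a finite set Lambda of size k as R^k
(Lambda enumerated as 0..<k).\<close>

type_synonym rmat = "nat \<Rightarrow> nat \<Rightarrow> real"

definition wf_mat :: "nat \<Rightarrow> nat \<Rightarrow> rmat \<Rightarrow> bool" where
  "wf_mat m n M \<longleftrightarrow> (\<forall>i j. (m \<le> i \<or> n \<le> j) \<longrightarrow> M i j = 0)"

definition mmul :: "nat \<Rightarrow> rmat \<Rightarrow> rmat \<Rightarrow> rmat" where
  "mmul k M N = (\<lambda>i j. \<Sum>l<k. M i l * N l j)"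

definition idm :: "nat \<Rightarrow> rmat" where
  "idm n = (\<lambda>i j. if i = j \<and> i < n then 1 else 0)"

text \<open>The basis vector e_a \<otimes> e_b corresponds to index a * (dimension of second factor) + b; for
R^Lambda \<otimes> R^Lambda' = R^(Lambda x Lambda') this is the enumeration of pairs.\<close>
definition kron :: "nat \<Rightarrow> nat \<Rightarrow> rmat \<Rightarrow> rmat \<Rightarrow> rmat" where
  "kron r c M N = (\<lambda>i j. M (i div r) (j div c) * N (i mod r) (j mod c))"

definition ones :: "nat \<Rightarrow> rmat" where
  "ones n = (\<lambda>i j. if i = 0 \<and> j < n then 1 else 0)"

definition lincomb :: "nat \<Rightarrow> (nat \<Rightarrow> real) \<Rightarrow> (nat \<Rightarrow> rmat) \<Rightarrow> rmat" where
  "lincomb k c Ms = (\<lambda>i j. \<Sum>l<k. c l * Ms l i j)"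

definition invertible_m :: "nat \<Rightarrow> nat \<Rightarrow> rmat \<Rightarrow> bool" where
  "invertible_m m n M \<longleftrightarrow> m = n \<and> wf_mat n n M \<and>
     (\<exists>N. wf_mat n n N \<and> mmul n M N = idm n \<and> mmul n N M = idm n)"

definition inv_m :: "nat \<Rightarrow> rmat \<Rightarrow> rmat" where
  "inv_m n M = (SOME N. wf_mat n n N \<and> mmul n M N = idm n \<and> mmul n N M = idm n)"

text \<open>Systems are the elements of type 's; tens is the composition of systems, I the trivial system,
dm A the dimension of the vector space A (realised as R^(dm A)), Proc A B the set of
processes A -> B (as matrices of size dm B x dm A), u A the deterministic effect.\<close>
definition tl_gpt ::
  "('s \<Rightarrow> 's \<Rightarrow> 's) \<Rightarrow> 's \<Rightarrow> ('s \<Rightarrow> nat) \<Rightarrow> ('s \<Rightarrow> 's \<Rightarrow> rmat set) \<Rightarrow> ('s \<Rightarrow> rmat) \<Rightarrow> bool" where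
  "tl_gpt tens I dm Proc u \<longleftrightarrow>
     dm I = 1 \<and>
     (\<forall>A B. dm (tens A B) = dm A * dm B) \<and>
     (\<forall>A B T. T \<in> Proc A B \<longrightarrow> wf_mat (dm B) (dm A) T) \<and>
     (\<forall>A B C T S. T \<in> Proc A B \<longrightarrow> S \<in> Proc B C \<longrightarrow> mmul (dm B) S T \<in> Proc A C) \<and>
     (\<forall>A B C D T S. T \<in> Proc A B \<longrightarrow> S \<in> Proc C D \<longrightarrow>
        kron (dm D) (dm C) T S \<in> Proc (tens A C) (tens B D)) \<and>
     (\<forall>A. idm (dm A) \<in> Proc A A) \<and>
     \<comment> \<open>states span A\<close>
     (\<forall>A v. wf_mat (dm A) 1 v \<longrightarrow>
        (\<exists>k c S. (\<forall>l<k. S l \<in> Proc I A) \<and> v = lincomb k c S)) \<and>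
     \<comment> \<open>effects span the dual of A\<close>
     (\<forall>A w. wf_mat 1 (dm A) w \<longrightarrow>
        (\<exists>k c E. (\<forall>l<k. E l \<in> Proc A I) \<and> w = lincomb k c E)) \<and>
     \<comment> \<open>scalars lie in [0,1]\<close>
     (\<forall>s \<in> Proc I I. 0 \<le> s 0 0 \<and> s 0 0 \<le> 1) \<and>
     \<comment> \<open>convexity\<close>
     (\<forall>A B k \<omega> Ts. (\<forall>l<k. 0 \<le> \<omega> l \<and> Ts l \<in> Proc A B) \<and> (\<Sum>l<k. \<omega> l) = 1 \<longrightarrow>
        lincomb k \<omega> Ts \<in> Proc A B) \<and>
     \<comment> \<open>deterministic effects\<close>
     (\<forall>A. u A \<in> Proc A I) \<and>
     (\<forall>A B. u (tens A B) = kron 1 (dm B) (u A) (u B))"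

text \<open>A quasiprobabilistic model: Lam A = |Lambda_A|, so xi(A) = R^(Lambda_A);
xi A B T is the quasi-substochastic matrix assigned to the process T : A -> B.\<close>
definition quasi_model ::
  "('s \<Rightarrow> 's \<Rightarrow> 's) \<Rightarrow> 's \<Rightarrow> ('s \<Rightarrow> nat) \<Rightarrow> ('s \<Rightarrow> 's \<Rightarrow> rmat set) \<Rightarrow> ('s \<Rightarrow> rmat)
    \<Rightarrow> ('s \<Rightarrow> nat) \<Rightarrow> ('s \<Rightarrow> 's \<Rightarrow> rmat \<Rightarrow> rmat) \<Rightarrow> bool" where
  "quasi_model tens I dm Proc u Lam xi \<longleftrightarrow>
     Lam I = 1 \<and>
     (\<forall>A B. Lam (tens A B) = Lam A * Lam B) \<and>
     (\<forall>A B T. T \<in> Proc A B \<longrightarrow> wf_mat (Lam B) (Lam A) (xi A B T)) \<and>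
     (\<forall>A B C T S. T \<in> Proc A B \<longrightarrow> S \<in> Proc B C \<longrightarrow>
        xi A C (mmul (dm B) S T) = mmul (Lam B) (xi B C S) (xi A B T)) \<and>
     (\<forall>A B C D T S. T \<in> Proc A B \<longrightarrow> S \<in> Proc C D \<longrightarrow>
        xi (tens A C) (tens B D) (kron (dm D) (dm C) T S) =
          kron (Lam D) (Lam C) (xi A B T) (xi C D S)) \<and>
     (\<forall>A. xi A A (idm (dm A)) = idm (Lam A)) \<and>
     \<comment> \<open>(1) deterministic effects go to the all-ones covector\<close>
     (\<forall>A. xi A I (u A) = ones (Lam A)) \<and>
     \<comment> \<open>(2) empirical adequacy\<close>
     (\<forall>s \<in> Proc I I. xi I I s = s) \<and>
     \<comment> \<open>(3) convex-linearity\<close>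
     (\<forall>A B k \<omega> Ts. (\<forall>l<k. 0 \<le> \<omega> l \<and> Ts l \<in> Proc A B) \<and> (\<Sum>l<k. \<omega> l) = 1 \<longrightarrow>
        xi A B (lincomb k \<omega> Ts) = lincomb k \<omega> (\<lambda>l. xi A B (Ts l))) \<and>
     \<comment> \<open>(3) coarse-graining of effects\<close>
     (\<forall>A k Es. 0 < k \<and> (\<forall>l<k. Es l \<in> Proc A I) \<and> lincomb k (\<lambda>_. 1) Es \<in> Proc A I \<longrightarrow>
        xi A I (lincomb k (\<lambda>_. 1) Es) = lincomb k (\<lambda>_. 1) (\<lambda>l. xi A I (Es l)))"

end

theory Submission
  imports Defs
begin


lemma sum_delta1: "(\<Sum>l<(m::nat). (if i = l \<and> i < m then (1::real) else 0) * f l) = (if i < m then f i else 0)"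
proof -
  have "(\<Sum>l<(m::nat). (if i = l \<and> i < m then (1::real) else 0) * f l) = (\<Sum>l<m. if l = i then f l else 0)"
    by (rule sum.cong) auto
  also have "\<dots> = (if i < m then f i else 0)" by (simp only: sum.delta finite_lessThan) simp
  finally show ?thesis .
qed

lemma sum_delta2: "(\<Sum>l<(m::nat). f l * (if l = j \<and> l < m then (1::real) else 0)) = (if j < m then f j else 0)"
proof -
  have "(\<Sum>l<(m::nat). f l * (if l = j \<and> l < m then (1::real) else 0)) = (\<Sum>l<m. if l = j then f l else 0)"
    by (rule sum.cong) auto
  also have "\<dots> = (if j < m then f j else 0)" by (simp only: sum.delta finite_lessThan) simp
  finally show ?thesis .
qed

lemma mmul_idm_left: "wf_mat m n M \<Longrightarrow> mmul m (idm m) M = M"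
  unfolding mmul_def idm_def 
  by (rule ext, rule ext) (simp add: sum_delta1 wf_mat_def)

lemma mmul_idm_right: "wf_mat m n M \<Longrightarrow> mmul n M (idm n) = M"
  unfolding mmul_def idm_def
  by (rule ext, rule ext) (simp only: sum_delta2, simp add: wf_mat_def)

lemma mmul_assoc: "mmul n (mmul m A B) C = mmul m A (mmul n B C)"
  unfolding mmul_def
  by (rule ext, rule ext) (simp add: sum_distrib_left sum_distrib_right mult.assoc sum.swap[of _ "{..<n}"])


locale qm =
  fixes tens :: "'s \<Rightarrow> 's \<Rightarrow> 's" and I :: 's and dm :: "'s \<Rightarrow> nat"
    and Proc :: "'s \<Rightarrow> 's \<Rightarrow> rmat set" and u :: "'s \<Rightarrow> rmat"
    and Lam :: "'s \<Rightarrow> nat" and xi :: "'s \<Rightarrow> 's \<Rightarrow> rmat \<Rightarrow> rmat"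
  assumes G: "tl_gpt tens I dm Proc u"
    and M: "quasi_model tens I dm Proc u Lam xi"
begin

lemma dmI: "dm I = 1" using G unfolding tl_gpt_def by (elim conjE) assumption
lemma wfP0: "\<forall>A B T. T \<in> Proc A B \<longrightarrow> wf_mat (dm B) (dm A) T" using G unfolding tl_gpt_def by (elim conjE) assumption
lemma wfP: "T \<in> Proc A B \<Longrightarrow> wf_mat (dm B) (dm A) T" using wfP0 by blast
lemma compP0: "\<forall>A B C T S. T \<in> Proc A B \<longrightarrow> S \<in> Proc B C \<longrightarrow> mmul (dm B) S T \<in> Proc A C"
  using G unfolding tl_gpt_def by (elim conjE) assumption
lemma compP: "T \<in> Proc A B \<Longrightarrow> S \<in> Proc B C \<Longrightarrow> mmul (dm B) S T \<in> Proc A C"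
  using compP0 by blast
lemma idP0: "\<forall>A. idm (dm A) \<in> Proc A A" using G unfolding tl_gpt_def by (elim conjE) assumption
lemma idP: "idm (dm A) \<in> Proc A A" using idP0 by blast
lemma spanS0: "\<forall>A v. wf_mat (dm A) 1 v \<longrightarrow> (\<exists>k c S. (\<forall>l<k. S l \<in> Proc I A) \<and> v = lincomb k c S)"
  using G unfolding tl_gpt_def by (elim conjE) assumption
lemma spanS: "wf_mat (dm A) 1 v \<Longrightarrow> \<exists>k c S. (\<forall>l<k. S l \<in> Proc I A) \<and> v = lincomb k c S"
  using spanS0 by blast
lemma spanE0: "\<forall>A w. wf_mat 1 (dm A) w \<longrightarrow> (\<exists>k c E. (\<forall>l<k. E l \<in> Proc A I) \<and> w = lincomb k c E)"
  using G unfolding tl_gpt_def by (elim conjE) assumption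
lemma spanE: "wf_mat 1 (dm A) w \<Longrightarrow> \<exists>k c E. (\<forall>l<k. E l \<in> Proc A I) \<and> w = lincomb k c E"
  using spanE0 by blast
lemma scalP0: "\<forall>s \<in> Proc I I. 0 \<le> s 0 0 \<and> s 0 0 \<le> 1"
  using G unfolding tl_gpt_def by (elim conjE) assumption
lemma scalP: "s \<in> Proc I I \<Longrightarrow> 0 \<le> s 0 0 \<and> s 0 0 \<le> 1"
  using scalP0 by blast
lemma convP0: "\<forall>A B k \<omega> Ts. (\<forall>l<k. 0 \<le> \<omega> l \<and> Ts l \<in> Proc A B) \<and> (\<Sum>l<k. \<omega> l) = 1 \<longrightarrow>
        lincomb k \<omega> Ts \<in> Proc A B"
  using G unfolding tl_gpt_def by (elim conjE) assumption
lemma convP: "(\<forall>l<k. 0 \<le> \<omega> l \<and> Ts l \<in> Proc A B) \<Longrightarrow> (\<Sum>l<k. \<omega> l) = 1 \<Longrightarrow>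
        lincomb k \<omega> Ts \<in> Proc A B"
  using convP0 by blast
lemma uP0: "\<forall>A. u A \<in> Proc A I" using G unfolding tl_gpt_def by (elim conjE) assumption
lemma uP: "u A \<in> Proc A I" using uP0 by blast

lemma LamI: "Lam I = 1" using M unfolding quasi_model_def by (elim conjE) assumption
lemma xwf0: "\<forall>A B T. T \<in> Proc A B \<longrightarrow> wf_mat (Lam B) (Lam A) (xi A B T)"
  using M unfolding quasi_model_def by (elim conjE) assumption
lemma xwf: "T \<in> Proc A B \<Longrightarrow> wf_mat (Lam B) (Lam A) (xi A B T)"
  using xwf0 by blast
lemma xcomp0: "\<forall>A B C T S. T \<in> Proc A B \<longrightarrow> S \<in> Proc B C \<longrightarrow>
        xi A C (mmul (dm B) S T) = mmul (Lam B) (xi B C S) (xi A B T)"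
  using M unfolding quasi_model_def by (elim conjE) assumption
lemma xcomp: "T \<in> Proc A B \<Longrightarrow> S \<in> Proc B C \<Longrightarrow>
        xi A C (mmul (dm B) S T) = mmul (Lam B) (xi B C S) (xi A B T)"
  using xcomp0 by blast
lemma xid0: "\<forall>A. xi A A (idm (dm A)) = idm (Lam A)"
  using M unfolding quasi_model_def by (elim conjE) assumption
lemma xid: "xi A A (idm (dm A)) = idm (Lam A)"
  using xid0 by blast
lemma xu0: "\<forall>A. xi A I (u A) = ones (Lam A)"
  using M unfolding quasi_model_def by (elim conjE) assumption
lemma xu: "xi A I (u A) = ones (Lam A)"
  using xu0 by blast
lemma xscal0: "\<forall>s \<in> Proc I I. xi I I s = s"
  using M unfolding quasi_model_def by (elim conjE) assumption
lemma xscal: "s \<in> Proc I I \<Longrightarrow> xi I I s = s"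
  using xscal0 by blast
lemma xconv0: "\<forall>A B k \<omega> Ts. (\<forall>l<k. 0 \<le> \<omega> l \<and> Ts l \<in> Proc A B) \<and> (\<Sum>l<k. \<omega> l) = 1 \<longrightarrow>
        xi A B (lincomb k \<omega> Ts) = lincomb k \<omega> (\<lambda>l. xi A B (Ts l))"
  using M unfolding quasi_model_def by (elim conjE) assumption
lemma xconv: "(\<forall>l<k. 0 \<le> \<omega> l \<and> Ts l \<in> Proc A B) \<Longrightarrow> (\<Sum>l<k. \<omega> l) = 1 \<Longrightarrow>
        xi A B (lincomb k \<omega> Ts) = lincomb k \<omega> (\<lambda>l. xi A B (Ts l))"
  using xconv0 by blast
lemma xcg0: "\<forall>A k Es. 0 < k \<and> (\<forall>l<k. Es l \<in> Proc A I) \<and> lincomb k (\<lambda>_. 1) Es \<in> Proc A I \<longrightarrow>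
        xi A I (lincomb k (\<lambda>_. 1) Es) = lincomb k (\<lambda>_. 1) (\<lambda>l. xi A I (Es l))"
  using M unfolding quasi_model_def by (elim conjE) assumption
lemma xcg: "0 < k \<Longrightarrow> (\<forall>l<k. Es l \<in> Proc A I) \<Longrightarrow> lincomb k (\<lambda>_. 1) Es \<in> Proc A I \<Longrightarrow>
        xi A I (lincomb k (\<lambda>_. 1) Es) = lincomb k (\<lambda>_. 1) (\<lambda>l. xi A I (Es l))"
  using xcg0 by blast

lemma convF:
  fixes K :: "'k set"
  assumes "finite K" "\<forall>x\<in>K. 0 \<le> \<omega> x \<and> T x \<in> Proc A B" "(\<Sum>x\<in>K. \<omega> x) = 1"
  shows "(\<lambda>i j. \<Sum>x\<in>K. \<omega> x * T x i j) \<in> Proc A B \<and>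
         xi A B (\<lambda>i j. \<Sum>x\<in>K. \<omega> x * T x i j) = (\<lambda>i j. \<Sum>x\<in>K. \<omega> x * xi A B (T x) i j)"
proof -
  obtain h where h: "bij_betw h {..<card K} K"
    using ex_bij_betw_nat_finite[OF assms(1)] lessThan_atLeast0 by metis
  have re: "\<And>g::'k \<Rightarrow> real. (\<Sum>x\<in>K. g x) = (\<Sum>l<card K. g (h l))"
    using sum.reindex_bij_betw[OF h] by metis
  have hK: "\<And>l. l < card K \<Longrightarrow> h l \<in> K" using h bij_betwE by blast
  have c1: "\<forall>l<card K. 0 \<le> (\<omega> \<circ> h) l \<and> (T \<circ> h) l \<in> Proc A B" using assms(2) hK by auto
  have c2: "(\<Sum>l<card K. (\<omega> \<circ> h) l) = 1" using assms(3) re by simp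
  have e1: "(\<lambda>i j. \<Sum>x\<in>K. \<omega> x * T x i j) = lincomb (card K) (\<omega> \<circ> h) (T \<circ> h)"
    unfolding lincomb_def by (rule ext, rule ext, subst re) simp
  have e2: "(\<lambda>i j. \<Sum>x\<in>K. \<omega> x * xi A B (T x) i j) = lincomb (card K) (\<omega> \<circ> h) (\<lambda>l. xi A B ((T \<circ> h) l))"
    unfolding lincomb_def by (rule ext, rule ext, subst re) simp
  show ?thesis unfolding e1 e2 using convP[OF c1 c2] xconv[OF c1 c2] by (simp add: comp_def)
qed

lemma affF:
  fixes K :: "'k set"
  assumes "finite K" "\<forall>x\<in>K. 0 \<le> a x \<and> 0 \<le> b x \<and> T x \<in> Proc A B"
    "(\<Sum>x\<in>K. a x) = (\<Sum>x\<in>K. b x)" "0 < (\<Sum>x\<in>K. a x)"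
    "(\<lambda>i j. \<Sum>x\<in>K. a x * T x i j) = (\<lambda>i j. \<Sum>x\<in>K. b x * T x i j)"
  shows "(\<lambda>i j. \<Sum>x\<in>K. a x * xi A B (T x) i j) = (\<lambda>i j. \<Sum>x\<in>K. b x * xi A B (T x) i j)"
proof -
  define W where "W = (\<Sum>x\<in>K. a x)"
  have W: "W > 0" using assms(4) W_def by simp
  have ca: "(\<Sum>x\<in>K. a x / W) = 1" using W by (simp add: W_def sum_divide_distrib[symmetric])
  have cb: "(\<Sum>x\<in>K. b x / W) = 1" using W assms(3) by (simp add: W_def sum_divide_distrib[symmetric])
  have pa: "\<forall>x\<in>K. 0 \<le> a x / W \<and> T x \<in> Proc A B" using assms(2) W by auto
  have pb: "\<forall>x\<in>K. 0 \<le> b x / W \<and> T x \<in> Proc A B" using assms(2) W by auto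
  have eq: "(\<lambda>i j. \<Sum>x\<in>K. a x / W * T x i j) = (\<lambda>i j. \<Sum>x\<in>K. b x / W * T x i j)"
  proof (rule ext, rule ext)
    fix i j
    have "(\<Sum>x\<in>K. a x / W * T x i j) = (\<Sum>x\<in>K. a x * T x i j) / W"
      by (simp add: sum_divide_distrib)
    also have "\<dots> = (\<Sum>x\<in>K. b x * T x i j) / W" using fun_cong[OF fun_cong[OF assms(5)]] by simp
    also have "\<dots> = (\<Sum>x\<in>K. b x / W * T x i j)" by (simp add: sum_divide_distrib)
    finally show "(\<Sum>x\<in>K. a x / W * T x i j) = (\<Sum>x\<in>K. b x / W * T x i j)" .
  qed
  have X: "(\<lambda>i j. \<Sum>x\<in>K. a x / W * xi A B (T x) i j) = (\<lambda>i j. \<Sum>x\<in>K. b x / W * xi A B (T x) i j)"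
    using convF[OF assms(1) pa ca] convF[OF assms(1) pb cb] eq by simp
  show ?thesis
  proof (rule ext, rule ext)
    fix i j
    have "(\<Sum>x\<in>K. a x * xi A B (T x) i j) = W * (\<Sum>x\<in>K. a x / W * xi A B (T x) i j)"
      using W by (simp add: sum_distrib_left)
    also have "\<dots> = W * (\<Sum>x\<in>K. b x / W * xi A B (T x) i j)" using fun_cong[OF fun_cong[OF X]] by simp
    also have "\<dots> = (\<Sum>x\<in>K. b x * xi A B (T x) i j)" using W by (simp add: sum_distrib_left)
    finally show "(\<Sum>x\<in>K. a x * xi A B (T x) i j) = (\<Sum>x\<in>K. b x * xi A B (T x) i j)" .
  qed
qed

end



lemma sq_lemma:
  fixes s e :: rmat
  assumes ws: "wf_mat n 1 s" and we: "wf_mat 1 n e"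
  shows "mmul n (\<lambda>i j. idm n i j / 2 + s i 0 * e 0 j / 2) (\<lambda>i j. idm n i j / 2 + s i 0 * e 0 j / 2)
       = (\<lambda>i j. idm n i j / 4 + (1/2 + (\<Sum>p<n. e 0 p * s p 0) / 4) * (s i 0 * e 0 j))"
proof (rule ext, rule ext)
  fix i j
  let ?p = "(\<Sum>p<n. e 0 p * s p 0)"
  have "mmul n (\<lambda>i j. idm n i j / 2 + s i 0 * e 0 j / 2) (\<lambda>i j. idm n i j / 2 + s i 0 * e 0 j / 2) i j
     = (\<Sum>l<n. (idm n i l * idm n l j / 4 + idm n i l * (s l 0 * e 0 j) / 4)
              + ((s i 0 * e 0 l) * idm n l j / 4 + s i 0 * e 0 j * (e 0 l * s l 0) / 4))"
    unfolding mmul_def by (rule sum.cong) (simp_all add: algebra_simps)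
  also have "\<dots> = (\<Sum>l<n. idm n i l * idm n l j) / 4 + (\<Sum>l<n. idm n i l * (s l 0 * e 0 j)) / 4
       + (\<Sum>l<n. (s i 0 * e 0 l) * idm n l j) / 4 + s i 0 * e 0 j * ?p / 4"
    by (simp only: sum.distrib sum_divide_distrib[symmetric] sum_distrib_left[symmetric])
  also have "\<dots> = idm n i j / 4 + (1/2 + ?p / 4) * (s i 0 * e 0 j)"
  proof -
    have a: "(\<Sum>l<n. idm n i l * idm n l j) = idm n i j"
      unfolding idm_def by (subst sum_delta1) auto
    have b: "(\<Sum>l<n. idm n i l * (s l 0 * e 0 j)) = s i 0 * e 0 j"
      unfolding idm_def by (subst sum_delta1) (use ws in \<open>auto simp: wf_mat_def\<close>)
    have c: "(\<Sum>l<n. (s i 0 * e 0 l) * idm n l j) = s i 0 * e 0 j"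
      unfolding idm_def by (subst sum_delta2) (use we in \<open>auto simp: wf_mat_def\<close>)
    show ?thesis unfolding a b c by (simp add: algebra_simps)
  qed
  finally show "mmul n (\<lambda>i j. idm n i j / 2 + s i 0 * e 0 j / 2) (\<lambda>i j. idm n i j / 2 + s i 0 * e 0 j / 2) i j
       = idm n i j / 4 + (1/2 + ?p / 4) * (s i 0 * e 0 j)" .
qed

lemma sum_plus3:
  assumes "finite K"
  shows "(\<Sum>x\<in>Inl ` K \<union> {Inr 0, Inr 1, Inr (2::nat)}. f x) = (\<Sum>x\<in>K. f (Inl x)) + f (Inr 0) + f (Inr 1) + f (Inr 2)"
proof -
  have "(\<Sum>x\<in>Inl ` K \<union> {Inr 0, Inr 1, Inr (2::nat)}. f x) = (\<Sum>x\<in>Inl ` K. f x) + (\<Sum>x\<in>{Inr 0, Inr 1, Inr (2::nat)}. f x)"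
    by (rule sum.union_disjoint) (use assms in auto)
  also have "(\<Sum>x\<in>Inl ` K. f x) = (\<Sum>x\<in>K. f (Inl x))" by (simp add: sum.reindex)
  finally show ?thesis by (simp add: add.assoc)
qed


lemma R1:
  fixes M :: rmat and c :: "'k \<Rightarrow> real"
  shows "mmul n M (\<lambda>i j. \<Sum>x\<in>K. c x * (v x i 0 * w x 0 j)) = (\<lambda>i j. \<Sum>x\<in>K. c x * (mmul n M (v x) i 0 * w x 0 j))"
proof (rule ext, rule ext)
  fix i j
  have "mmul n M (\<lambda>i j. \<Sum>x\<in>K. c x * (v x i 0 * w x 0 j)) i j = (\<Sum>l<n. M i l * (\<Sum>x\<in>K. c x * (v x l 0 * w x 0 j)))"
    unfolding mmul_def ..
  also have "\<dots> = (\<Sum>x\<in>K. \<Sum>l<n. M i l * (c x * (v x l 0 * w x 0 j)))"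
    by (simp add: sum_distrib_left sum.swap[of _ K])
  also have "\<dots> = (\<Sum>x\<in>K. c x * (mmul n M (v x) i 0 * w x 0 j))"
    unfolding mmul_def by (rule sum.cong) (simp_all add: sum_distrib_left sum_distrib_right mult_ac)
  finally show "mmul n M (\<lambda>i j. \<Sum>x\<in>K. c x * (v x i 0 * w x 0 j)) i j = (\<Sum>x\<in>K. c x * (mmul n M (v x) i 0 * w x 0 j))" .
qed

lemma R2:
  fixes N :: rmat and c :: "'k \<Rightarrow> real"
  shows "mmul n (\<lambda>i j. \<Sum>x\<in>K. c x * (v x i 0 * w x 0 j)) N = (\<lambda>i j. \<Sum>x\<in>K. c x * (v x i 0 * mmul n (w x) N 0 j))"
proof (rule ext, rule ext)
  fix i j
  have "mmul n (\<lambda>i j. \<Sum>x\<in>K. c x * (v x i 0 * w x 0 j)) N i j = (\<Sum>l<n. (\<Sum>x\<in>K. c x * (v x i 0 * w x 0 l)) * N l j)"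
    unfolding mmul_def ..
  also have "\<dots> = (\<Sum>x\<in>K. \<Sum>l<n. (c x * (v x i 0 * w x 0 l)) * N l j)"
    by (simp add: sum_distrib_right sum.swap[of _ K])
  also have "\<dots> = (\<Sum>x\<in>K. c x * (v x i 0 * mmul n (w x) N 0 j))"
    unfolding mmul_def by (rule sum.cong) (simp_all add: sum_distrib_left sum_distrib_right mult_ac)
  finally show "mmul n (\<lambda>i j. \<Sum>x\<in>K. c x * (v x i 0 * w x 0 j)) N i j = (\<Sum>x\<in>K. c x * (v x i 0 * mmul n (w x) N 0 j))" .
qed

context qm begin

lemma scal_eq:
  assumes s: "s \<in> Proc I A" and e: "e \<in> Proc A I"
  shows "(\<Sum>p<dm A. e 0 p * s p 0) = (\<Sum>q<Lam A. xi A I e 0 q * xi I A s q 0)"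
proof -
  have P: "mmul (dm A) e s \<in> Proc I I" using compP[OF s e] .
  have "mmul (dm A) e s = xi I I (mmul (dm A) e s)" using xscal[OF P] by simp
  also have "\<dots> = mmul (Lam A) (xi A I e) (xi I A s)" using xcomp[OF s e] .
  finally have "mmul (dm A) e s 0 0 = mmul (Lam A) (xi A I e) (xi I A s) 0 0" by (rule arg_cong)
  then show ?thesis unfolding mmul_def .

qed

lemma scal_le:
  assumes s: "s \<in> Proc I A" and e: "e \<in> Proc A I"
  shows "(\<Sum>p<dm A. e 0 p * s p 0) \<le> 1"
  using scalP[OF compP[OF s e]] unfolding mmul_def by simp

lemma mp_proc:
  assumes s: "s \<in> Proc I A" and e: "e \<in> Proc A I"
  shows "(\<lambda>i j. s i 0 * e 0 j) \<in> Proc A A"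
    and "xi A A (\<lambda>i j. s i 0 * e 0 j) = (\<lambda>i j. xi I A s i 0 * xi A I e 0 j)"
proof -
  have eq: "mmul (dm I) s e = (\<lambda>i j. s i 0 * e 0 j)" unfolding mmul_def dmI by simp
  show "(\<lambda>i j. s i 0 * e 0 j) \<in> Proc A A" using compP[OF e s] eq by simp
  have "xi A A (mmul (dm I) s e) = mmul (Lam I) (xi I A s) (xi A I e)" using xcomp[OF e s] .
  then show "xi A A (\<lambda>i j. s i 0 * e 0 j) = (\<lambda>i j. xi I A s i 0 * xi A I e 0 j)"
    unfolding eq LamI by (simp add: mmul_def)
qed


lemma LIN:
  fixes K :: "'k set" and P :: "'k \<Rightarrow> rmat" and c :: "'k \<Rightarrow> real"
  assumes s0: "s0 \<in> Proc I A" and e0: "e0 \<in> Proc A I"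
    and p1: "(\<Sum>p<dm A. e0 0 p * s0 p 0) < 1"
    and fK: "finite K" and PK: "\<forall>x\<in>K. P x \<in> Proc A A"
    and dec: "idm (dm A) = (\<lambda>i j. \<Sum>x\<in>K. c x * P x i j)"
  shows "idm (Lam A) = (\<lambda>i j. \<Sum>x\<in>K. c x * xi A A (P x) i j)"
proof -
  define d where "d = dm A"
  define L where "L = Lam A"
  define p0 where "p0 = (\<Sum>p<dm A. e0 0 p * s0 p 0)"
  define \<kappa> where "\<kappa> = 1/2 + p0/4"
  define w where "w = 1/4 + \<kappa>"
  have w1: "w < 1" using p1 unfolding w_def \<kappa>_def p0_def by simp
  have p0': "p0 = (\<Sum>q<Lam A. xi A I e0 0 q * xi I A s0 q 0)" unfolding p0_def by (rule scal_eq[OF s0 e0])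
  define \<sigma> where "\<sigma> = xi I A s0"
  define \<epsilon> where "\<epsilon> = xi A I e0"
  define Q0 where "Q0 = idm d"
  define P0 where "P0 = (\<lambda>i j. s0 i 0 * e0 0 j)"
  define X0 where "X0 = (\<lambda>i j. \<sigma> i 0 * \<epsilon> 0 j)"
  have Q0P: "Q0 \<in> Proc A A" unfolding Q0_def d_def by (rule idP)
  have xQ0: "xi A A Q0 = idm L" unfolding Q0_def d_def L_def by (rule xid)
  have P0P: "P0 \<in> Proc A A" unfolding P0_def by (rule mp_proc(1)[OF s0 e0])
  have xP0: "xi A A P0 = X0" unfolding P0_def X0_def \<sigma>_def \<epsilon>_def by (rule mp_proc(2)[OF s0 e0])
  define F where "F = (\<lambda>x::nat. if x = 0 then Q0 else P0)"
  have cF: "(\<lambda>i j. \<Sum>x\<in>{0::nat,1}. 1/2 * F x i j) \<in> Proc A A \<and>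
         xi A A (\<lambda>i j. \<Sum>x\<in>{0::nat,1}. 1/2 * F x i j) = (\<lambda>i j. \<Sum>x\<in>{0::nat,1}. 1/2 * xi A A (F x) i j)"
    by (rule convF) (auto simp: F_def Q0P P0P)
  define Th where "Th = (\<lambda>i j. idm d i j / 2 + s0 i 0 * e0 0 j / 2)"
  have ThE: "(\<lambda>i j. \<Sum>x\<in>{0::nat,1}. 1/2 * F x i j) = Th"
    unfolding Th_def F_def Q0_def P0_def by (simp add: algebra_simps)
  have xThE: "(\<lambda>i j. \<Sum>x\<in>{0::nat,1}. 1/2 * xi A A (F x) i j) = (\<lambda>i j. idm L i j / 2 + \<sigma> i 0 * \<epsilon> 0 j / 2)"
    by (simp add: F_def xQ0 xP0 X0_def algebra_simps)
  have ThP: "Th \<in> Proc A A" and xTh: "xi A A Th = (\<lambda>i j. idm L i j / 2 + \<sigma> i 0 * \<epsilon> 0 j / 2)"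
    using cF unfolding ThE xThE by auto
  define Q3 where "Q3 = mmul d Th Th"
  have Q3P: "Q3 \<in> Proc A A" unfolding Q3_def d_def using compP[OF ThP ThP] .
  have xQ3a: "xi A A Q3 = mmul L (xi A A Th) (xi A A Th)" unfolding Q3_def d_def L_def by (rule xcomp[OF ThP ThP])
  have ws0: "wf_mat d 1 s0" using wfP[OF s0] dmI d_def by simp
  have we0: "wf_mat 1 d e0" using wfP[OF e0] dmI d_def by simp
  have wsg: "wf_mat L 1 \<sigma>" using xwf[OF s0] LamI L_def \<sigma>_def by simp
  have weg: "wf_mat 1 L \<epsilon>" using xwf[OF e0] LamI L_def \<epsilon>_def by simp
  have Q3E: "Q3 = (\<lambda>i j. Q0 i j / 4 + \<kappa> * P0 i j)"
  proof -
    have "Q3 = (\<lambda>i j. idm d i j / 4 + (1/2 + (\<Sum>p<d. e0 0 p * s0 p 0)/4) * (s0 i 0 * e0 0 j))"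
      unfolding Q3_def Th_def by (rule sq_lemma[OF ws0 we0])
    then show ?thesis unfolding Q0_def P0_def \<kappa>_def p0_def d_def .
  qed
  have xQ3E: "xi A A Q3 = (\<lambda>i j. idm L i j / 4 + \<kappa> * X0 i j)"
  proof -
    have "xi A A Q3 = (\<lambda>i j. idm L i j / 4 + (1/2 + (\<Sum>p<L. \<epsilon> 0 p * \<sigma> p 0)/4) * (\<sigma> i 0 * \<epsilon> 0 j))"
      unfolding xQ3a xTh by (rule sq_lemma[OF wsg weg])
    then show ?thesis unfolding X0_def \<kappa>_def p0' L_def \<sigma>_def \<epsilon>_def .
  qed
  define cp where "cp = (\<lambda>x. max (c x) 0)"
  define cn where "cn = (\<lambda>x. max (- c x) 0)"
  have cpn: "\<And>x. c x = cp x - cn x" unfolding cp_def cn_def by auto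
  define Wp where "Wp = (\<Sum>x\<in>K. cp x)"
  define Wn where "Wn = (\<Sum>x\<in>K. cn x)"
  have Wn0: "Wn \<ge> 0" unfolding Wn_def cn_def by (rule sum_nonneg) auto
  define D where "D = Wp - 1 - Wn"
  define t1 where "t1 = max D 0 / (1 - w)"
  define t2 where "t2 = max (- D) 0 / (1 - w)"
  have t1: "t1 \<ge> 0" and t2: "t2 \<ge> 0" unfolding t1_def t2_def using w1 by auto
  have tD: "(t1 - t2) * (1 - w) = D"
  proof -
    have nz: "1 - w \<noteq> 0" using w1 by simp
    have "(t1 - t2) * (1 - w) = t1 * (1 - w) - t2 * (1 - w)" by (simp add: left_diff_distrib)
    also have "\<dots> = max D 0 - max (- D) 0" unfolding t1_def t2_def using nz by simp
    also have "\<dots> = D" by (simp add: max_def)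
    finally show ?thesis .
  qed
  have k0: "\<kappa> \<ge> 0" unfolding \<kappa>_def p0_def
    using scalP[OF compP[OF s0 e0]] unfolding mmul_def by simp
  define T' where "T' = case_sum P (\<lambda>n::nat. if n = 0 then Q0 else if n = 1 then P0 else Q3)"
  define a where "a = case_sum cn (\<lambda>n::nat. if n = 0 then 1 + t2/4 else if n = 1 then t2 * \<kappa> else t1)"
  define b where "b = case_sum cp (\<lambda>n::nat. if n = 0 then t1/4 else if n = 1 then t1 * \<kappa> else t2)"
  define K' where "K' = Inl ` K \<union> {Inr 0, Inr 1, Inr (2::nat)}"
  have fK': "finite K'" unfolding K'_def using fK by simp
  have S: "\<And>f. (\<Sum>x\<in>K'. f x) = (\<Sum>x\<in>K. f (Inl x)) + f (Inr 0) + f (Inr 1) + f (Inr 2)"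
    unfolding K'_def by (rule sum_plus3[OF fK])
  have pos: "\<forall>x\<in>K'. 0 \<le> a x \<and> 0 \<le> b x \<and> T' x \<in> Proc A A"
    unfolding K'_def a_def b_def T'_def cp_def cn_def
    using t1 t2 k0 PK Q0P P0P Q3P by auto
  have sumeq: "(\<Sum>x\<in>K'. a x) = (\<Sum>x\<in>K'. b x)"
  proof -
    have sa: "(\<Sum>x\<in>K'. a x) = Wn + (1 + t2/4) + t2 * \<kappa> + t1" by (simp add: S a_def Wn_def)
    have sb: "(\<Sum>x\<in>K'. b x) = Wp + t1/4 + t1 * \<kappa> + t2" by (simp add: S b_def Wp_def)
    have tD': "t1 - t2 - t1/4 + t2/4 - t1 * \<kappa> + t2 * \<kappa> = Wp - 1 - Wn"
      using tD unfolding w_def D_def by (simp add: field_simps)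
    show ?thesis unfolding sa sb using tD' by linarith
  qed
  have sumpos: "0 < (\<Sum>x\<in>K'. a x)"
  proof -
    have sa: "(\<Sum>x\<in>K'. a x) = Wn + (1 + t2/4) + t2 * \<kappa> + t1" by (simp add: S a_def Wn_def)
    show ?thesis unfolding sa using Wn0 t1 t2 mult_nonneg_nonneg[OF t2 k0] by linarith
  qed
  have decp: "\<And>i j. idm d i j = (\<Sum>x\<in>K. cp x * P x i j) - (\<Sum>x\<in>K. cn x * P x i j)"
  proof -
    fix i j
    have "idm d i j = (\<Sum>x\<in>K. c x * P x i j)" using fun_cong[OF fun_cong[OF dec]] d_def by simp
    also have "\<dots> = (\<Sum>x\<in>K. cp x * P x i j - cn x * P x i j)"
      by (rule sum.cong) (simp_all add: cpn algebra_simps)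
    finally show "idm d i j = (\<Sum>x\<in>K. cp x * P x i j) - (\<Sum>x\<in>K. cn x * P x i j)"
      by (simp add: sum_subtractf)
  qed
  have meq: "(\<lambda>i j. \<Sum>x\<in>K'. a x * T' x i j) = (\<lambda>i j. \<Sum>x\<in>K'. b x * T' x i j)"
  proof (rule ext, rule ext)
    fix i j
    show "(\<Sum>x\<in>K'. a x * T' x i j) = (\<Sum>x\<in>K'. b x * T' x i j)"
      unfolding S a_def b_def T'_def using decp[of i j] unfolding Q3E Q0_def
      by (simp add: algebra_simps)
  qed
  have X: "(\<lambda>i j. \<Sum>x\<in>K'. a x * xi A A (T' x) i j) = (\<lambda>i j. \<Sum>x\<in>K'. b x * xi A A (T' x) i j)"
    by (rule affF[OF fK' pos sumeq sumpos meq])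
  show ?thesis
  proof (rule ext, rule ext)
    fix i j
    have e: "(\<Sum>x\<in>K'. a x * xi A A (T' x) i j) = (\<Sum>x\<in>K'. b x * xi A A (T' x) i j)"
      using fun_cong[OF fun_cong[OF X]] .
    have e2: "(\<Sum>x\<in>K. cn x * xi A A (P x) i j) + (1 + t2/4) * idm L i j + t2 * \<kappa> * X0 i j
       + t1 * (idm L i j / 4 + \<kappa> * X0 i j)
       = (\<Sum>x\<in>K. cp x * xi A A (P x) i j) + t1/4 * idm L i j + t1 * \<kappa> * X0 i j
       + t2 * (idm L i j / 4 + \<kappa> * X0 i j)"
      using e unfolding S a_def b_def T'_def by (simp add: xQ0 xP0 xQ3E)
    have e3: "(\<Sum>x\<in>K. c x * xi A A (P x) i j) = (\<Sum>x\<in>K. cp x * xi A A (P x) i j) - (\<Sum>x\<in>K. cn x * xi A A (P x) i j)"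
      by (simp add: cpn left_diff_distrib sum_subtractf)
    show "idm (Lam A) i j = (\<Sum>x\<in>K. c x * xi A A (P x) i j)"
      using e2 e3 unfolding L_def by (simp add: algebra_simps)
  qed
qed


lemma DEC:
  "\<exists>K::(nat \<times> nat \<times> nat) set. \<exists>c S E. finite K \<and> (\<forall>x\<in>K. S x \<in> Proc I A \<and> E x \<in> Proc A I) \<and>
     idm (dm A) = (\<lambda>i j. \<Sum>x\<in>K. c x * (S x i 0 * E x 0 j))"
proof -
  define d where "d = dm A"
  define bc where "bc = (\<lambda>j::nat. (\<lambda>p q. if p = j \<and> q = 0 then 1 else 0) :: rmat)"
  define br where "br = (\<lambda>j::nat. (\<lambda>p q. if p = 0 \<and> q = j then 1 else 0) :: rmat)"
  have "\<forall>j. \<exists>k \<alpha> S. j < d \<longrightarrow> (\<forall>l<k. S l \<in> Proc I A) \<and> bc j = lincomb k \<alpha> S"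
  proof
    fix j
    show "\<exists>k \<alpha> S. j < d \<longrightarrow> (\<forall>l<k. S l \<in> Proc I A) \<and> bc j = lincomb k \<alpha> S"
    proof (cases "j < d")
      case True
      have "wf_mat (dm A) 1 (bc j)" unfolding wf_mat_def bc_def using True d_def by auto
      then show ?thesis using spanS by blast
    qed simp
  qed
  then obtain kS \<alpha>S SS where hS: "\<And>j. j < d \<Longrightarrow> (\<forall>l<kS j. SS j l \<in> Proc I A) \<and> bc j = lincomb (kS j) (\<alpha>S j) (SS j)"
    by metis
  have "\<forall>j. \<exists>k \<alpha> E. j < d \<longrightarrow> (\<forall>l<k. E l \<in> Proc A I) \<and> br j = lincomb k \<alpha> E"
  proof
    fix j
    show "\<exists>k \<alpha> E. j < d \<longrightarrow> (\<forall>l<k. E l \<in> Proc A I) \<and> br j = lincomb k \<alpha> E"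
    proof (cases "j < d")
      case True
      have "wf_mat 1 (dm A) (br j)" unfolding wf_mat_def br_def using True d_def by auto
      then show ?thesis using spanE by blast
    qed simp
  qed
  then obtain kE \<alpha>E EE where hE: "\<And>j. j < d \<Longrightarrow> (\<forall>l<kE j. EE j l \<in> Proc A I) \<and> br j = lincomb (kE j) (\<alpha>E j) (EE j)"
    by metis
  define K where "K = (SIGMA j:{..<d}. {..<kS j} \<times> {..<kE j})"
  define c where "c = (\<lambda>(j, l, m). \<alpha>S j l * \<alpha>E j m)"
  define S where "S = (\<lambda>(j::nat, l::nat, m::nat). SS j l)"
  define E where "E = (\<lambda>(j::nat, l::nat, m::nat). EE j m)"
  have fK: "finite K" unfolding K_def by auto
  have SE: "\<forall>x\<in>K. S x \<in> Proc I A \<and> E x \<in> Proc A I"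
    unfolding K_def S_def E_def using hS hE by auto
  have "idm (dm A) = (\<lambda>i j. \<Sum>x\<in>K. c x * (S x i 0 * E x 0 j))"
  proof (rule ext, rule ext)
    fix p q
    have "idm d p q = (\<Sum>j<d. bc j p 0 * br j 0 q)"
    proof -
      have "(\<Sum>j<d. bc j p 0 * br j 0 q) = (\<Sum>j<d. if j = p then (if q = p then 1 else 0) else 0)"
        by (rule sum.cong) (auto simp: bc_def br_def)
      also have "\<dots> = idm d p q" by (simp add: idm_def)
      finally show ?thesis by simp
    qed
    also have "\<dots> = (\<Sum>j<d. (\<Sum>l<kS j. \<alpha>S j l * SS j l p 0) * (\<Sum>m<kE j. \<alpha>E j m * EE j m 0 q))"
    proof (rule sum.cong)
      fix j assume "j \<in> {..<d}"
      then have j: "j < d" by simp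
      have "bc j p 0 = (\<Sum>l<kS j. \<alpha>S j l * SS j l p 0)"
        using hS[OF j] unfolding lincomb_def by metis
      moreover have "br j 0 q = (\<Sum>m<kE j. \<alpha>E j m * EE j m 0 q)"
        using hE[OF j] unfolding lincomb_def by metis
      ultimately show "bc j p 0 * br j 0 q = (\<Sum>l<kS j. \<alpha>S j l * SS j l p 0) * (\<Sum>m<kE j. \<alpha>E j m * EE j m 0 q)"
        by simp
    qed simp
    also have "\<dots> = (\<Sum>j<d. \<Sum>(l, m)\<in>{..<kS j} \<times> {..<kE j}. (\<alpha>S j l * SS j l p 0) * (\<alpha>E j m * EE j m 0 q))"
      by (rule sum.cong) (simp_all add: sum_product sum.cartesian_product)
    also have "\<dots> = (\<Sum>(j, lm)\<in>K. (case lm of (l, m) \<Rightarrow> (\<alpha>S j l * SS j l p 0) * (\<alpha>E j m * EE j m 0 q)))"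
      unfolding K_def by (subst sum.Sigma) auto
    also have "\<dots> = (\<Sum>x\<in>K. c x * (S x p 0 * E x 0 q))"
      by (rule sum.cong) (auto simp: c_def S_def E_def)
    finally show "idm (dm A) p q = (\<Sum>x\<in>K. c x * (S x p 0 * E x 0 q))" unfolding d_def .
  qed
  then show ?thesis using fK SE by blast
qed


lemma swap_lemma:
  fixes g :: "nat \<Rightarrow> real" and f :: "'k \<Rightarrow> nat \<Rightarrow> real"
  shows "(\<Sum>r<d. g r * (\<Sum>x\<in>K. f x r)) = (\<Sum>x\<in>K. \<Sum>r<d. g r * f x r)"
  by (simp add: sum_distrib_left sum.swap[of _ K])

lemma swap_lemma2:
  fixes g :: "nat \<Rightarrow> real" and f :: "'k \<Rightarrow> nat \<Rightarrow> real"
  shows "(\<Sum>r<d. (\<Sum>x\<in>K. f x r) * g r) = (\<Sum>x\<in>K. \<Sum>r<d. f x r * g r)"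
  by (simp add: sum_distrib_right sum.swap[of _ K])

lemma STEP1:
  "\<exists>K::(nat \<times> nat \<times> nat) set. \<exists>c S E. finite K \<and> (\<forall>x\<in>K. S x \<in> Proc I A \<and> E x \<in> Proc A I) \<and>
     idm (dm A) = (\<lambda>i j. \<Sum>x\<in>K. c x * (S x i 0 * E x 0 j)) \<and>
     idm (Lam A) = (\<lambda>i j. \<Sum>x\<in>K. c x * (xi I A (S x) i 0 * xi A I (E x) 0 j))"
proof (cases "dm A = 0")
  case True
  have wu: "wf_mat 1 0 (u A)" using wfP[OF uP[of A]] True dmI by simp
  have u0: "u A = (\<lambda>i j. 0)" using wu unfolding wf_mat_def by auto
  have lc: "lincomb 2 (\<lambda>_. 1) (\<lambda>_. u A) = u A" unfolding lincomb_def u0 by (simp add: numeral_2_eq_2)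
  have "xi A I (lincomb 2 (\<lambda>_. 1) (\<lambda>_. u A)) = lincomb 2 (\<lambda>_. 1) (\<lambda>l. xi A I (u A))"
    by (rule xcg) (auto simp: lc uP)
  then have "ones (Lam A) = lincomb 2 (\<lambda>_. 1) (\<lambda>l. ones (Lam A))"
    by (simp only: lc xu)
  then have "ones (Lam A) = (\<lambda>i j. 2 * ones (Lam A) i j)"
    unfolding lincomb_def by (simp add: numeral_2_eq_2)
  then have "ones (Lam A) 0 0 = 2 * ones (Lam A) 0 0" by metis
  then have L0: "Lam A = 0" unfolding ones_def by (cases "Lam A = 0") auto
  have "idm 0 = (\<lambda>i j. \<Sum>x\<in>{}. 0)" unfolding idm_def by simp
  then show ?thesis unfolding True L0
    by (intro exI[of _ "{}"]) auto
next
  case dpos: False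
  show ?thesis
  proof (cases "\<exists>s0 e0. s0 \<in> Proc I A \<and> e0 \<in> Proc A I \<and> (\<Sum>p<dm A. e0 0 p * s0 p 0) < 1")
    case True
    then obtain s0 e0 where s0: "s0 \<in> Proc I A" and e0: "e0 \<in> Proc A I" and p1: "(\<Sum>p<dm A. e0 0 p * s0 p 0) < 1"
      by blast
    obtain K :: "(nat \<times> nat \<times> nat) set" and c S E where fK: "finite K" and SE: "\<forall>x\<in>K. S x \<in> Proc I A \<and> E x \<in> Proc A I"
      and dec: "idm (dm A) = (\<lambda>i j. \<Sum>x\<in>K. c x * (S x i 0 * E x 0 j))"
      using DEC[of A] by blast
    define P where "P = (\<lambda>x i j. S x i 0 * E x 0 j)"
    have PK: "\<forall>x\<in>K. P x \<in> Proc A A" unfolding P_def using SE mp_proc(1) by blast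
    have xP: "\<And>x. x \<in> K \<Longrightarrow> xi A A (P x) = (\<lambda>i j. xi I A (S x) i 0 * xi A I (E x) 0 j)"
      unfolding P_def using SE mp_proc(2) by blast
    have "idm (Lam A) = (\<lambda>i j. \<Sum>x\<in>K. c x * xi A A (P x) i j)"
      by (rule LIN[OF s0 e0 p1 fK PK]) (simp add: dec P_def)
    also have "\<dots> = (\<lambda>i j. \<Sum>x\<in>K. c x * (xi I A (S x) i 0 * xi A I (E x) 0 j))"
      by (intro ext sum.cong) (simp_all add: xP)
    finally show ?thesis using fK SE dec by blast
  next
    case False
    have one: "\<And>s e. s \<in> Proc I A \<Longrightarrow> e \<in> Proc A I \<Longrightarrow> (\<Sum>p<dm A. e 0 p * s p 0) = 1"
    proof -
      fix s e assume s: "s \<in> Proc I A" and e: "e \<in> Proc A I"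
      have "\<not> (\<Sum>p<dm A. e 0 p * s p 0) < 1" using False s e by blast
      then show "(\<Sum>p<dm A. e 0 p * s p 0) = 1" using scal_le[OF s e] by linarith
    qed
    obtain K :: "(nat \<times> nat \<times> nat) set" and c S E where fK: "finite K" and SE: "\<forall>x\<in>K. S x \<in> Proc I A \<and> E x \<in> Proc A I"
      and dec: "idm (dm A) = (\<lambda>i j. \<Sum>x\<in>K. c x * (S x i 0 * E x 0 j))"
      using DEC[of A] by blast
    define d where "d = dm A"
    have dec': "\<And>i j. idm d i j = (\<Sum>x\<in>K. c x * (S x i 0 * E x 0 j))" using dec d_def by simp
    have "K \<noteq> {}"
    proof
      assume "K = {}"
      then have "idm d 0 0 = 0" using dec' by simp
      then show False using dpos d_def unfolding idm_def by simp
    qed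
    then obtain x0 where x0: "x0 \<in> K" by blast
    define s0 where "s0 = S x0"
    have s0P: "s0 \<in> Proc I A" using SE x0 s0_def by blast
    define eb where "eb = (\<lambda>q. \<Sum>x\<in>K. c x * E x 0 q)"
    define sb where "sb = (\<lambda>p. \<Sum>x\<in>K. c x * S x p 0)"
    have effb: "\<And>e q. e \<in> Proc A I \<Longrightarrow> e 0 q = eb q"
    proof -
      fix e q assume e: "e \<in> Proc A I"
      have we: "wf_mat 1 d e" using wfP[OF e] dmI d_def by simp
      have "e 0 q = mmul d e (idm d) 0 q" using mmul_idm_right[OF we] by simp
      also have "\<dots> = (\<Sum>r<d. e 0 r * (\<Sum>x\<in>K. c x * (S x r 0 * E x 0 q)))"
        unfolding mmul_def dec' ..
      also have "\<dots> = (\<Sum>x\<in>K. \<Sum>r<d. e 0 r * (c x * (S x r 0 * E x 0 q)))" by (rule swap_lemma)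
      also have "\<dots> = (\<Sum>x\<in>K. c x * E x 0 q * (\<Sum>r<d. e 0 r * S x r 0))"
        by (rule sum.cong) (simp_all add: sum_distrib_left mult_ac)
      also have "\<dots> = eb q" unfolding eb_def
        by (rule sum.cong) (use SE e one d_def in auto)
      finally show "e 0 q = eb q" .
    qed
    have stb: "\<And>s p. s \<in> Proc I A \<Longrightarrow> s p 0 = sb p"
    proof -
      fix s p assume s: "s \<in> Proc I A"
      have ws: "wf_mat d 1 s" using wfP[OF s] dmI d_def by simp
      have "s p 0 = mmul d (idm d) s p 0" using mmul_idm_left[OF ws] by simp
      also have "\<dots> = (\<Sum>r<d. (\<Sum>x\<in>K. c x * (S x p 0 * E x 0 r)) * s r 0)"
        unfolding mmul_def dec' ..
      also have "\<dots> = (\<Sum>x\<in>K. \<Sum>r<d. (c x * (S x p 0 * E x 0 r)) * s r 0)" by (rule swap_lemma2)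
      also have "\<dots> = (\<Sum>x\<in>K. c x * S x p 0 * (\<Sum>r<d. E x 0 r * s r 0))"
        by (rule sum.cong) (simp_all add: sum_distrib_left mult_ac)
      also have "\<dots> = sb p" unfolding sb_def
        by (rule sum.cong) (use SE s one d_def in auto)
      finally show "s p 0 = sb p" .
    qed
    have ebc: "\<And>q. eb q = (\<Sum>x\<in>K. c x) * eb q"
    proof -
      fix q
      have "(\<Sum>x\<in>K. c x * E x 0 q) = (\<Sum>x\<in>K. c x * eb q)"
        by (rule sum.cong) (use SE effb in auto)
      then have "eb q = (\<Sum>x\<in>K. c x * eb q)" unfolding eb_def by simp
      then show "eb q = (\<Sum>x\<in>K. c x) * eb q" by (simp add: sum_distrib_right)
    qed
    have idE: "idm d = (\<lambda>p q. s0 p 0 * u A 0 q)"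
    proof (rule ext, rule ext)
      fix p q
      have "idm d p q = (\<Sum>x\<in>K. c x * (sb p * eb q))"
        unfolding dec' by (rule sum.cong) (use SE stb effb in auto)
      also have "\<dots> = sb p * ((\<Sum>x\<in>K. c x) * eb q)" by (simp only: sum_distrib_right[symmetric]) (simp add: mult_ac)
      also have "\<dots> = sb p * eb q" using ebc by simp
      also have "\<dots> = s0 p 0 * u A 0 q" using stb[OF s0P] effb[OF uP] by simp
      finally show "idm d p q = s0 p 0 * u A 0 q" .
    qed
    have "idm (Lam A) = xi A A (idm (dm A))" using xid by simp
    also have "\<dots> = (\<lambda>i j. xi I A s0 i 0 * xi A I (u A) 0 j)" using idE d_def mp_proc(2)[OF s0P uP] by simp
    finally have L: "idm (Lam A) = (\<lambda>i j. \<Sum>x\<in>{(0::nat,0::nat,0::nat)}. 1 * (xi I A ((\<lambda>_. s0) x) i 0 * xi A I ((\<lambda>_. u A) x) 0 j))"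
      by simp
    have D: "idm (dm A) = (\<lambda>i j. \<Sum>x\<in>{(0::nat,0::nat,0::nat)}. 1 * ((\<lambda>_. s0) x i 0 * (\<lambda>_. u A) x 0 j))"
      using idE d_def by simp
    have P: "\<forall>x\<in>{(0::nat,0::nat,0::nat)}. (\<lambda>_. s0) x \<in> Proc I A \<and> (\<lambda>_. u A) x \<in> Proc A I"
      using s0P uP by simp
    show ?thesis
      apply (rule exI[of _ "{(0::nat,0::nat,0::nat)}"])
      apply (rule exI[of _ "\<lambda>_. 1"])
      apply (rule exI[of _ "\<lambda>_. s0"])
      apply (rule exI[of _ "\<lambda>_. u A"])
      using L D P by (intro conjI) simp_all
  qed
qed


lemma scal_mat:
  assumes s: "s \<in> Proc I A" and e: "e \<in> Proc A I"
  shows "mmul (dm A) e s = mmul (Lam A) (xi A I e) (xi I A s)"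
proof -
  have P: "mmul (dm A) e s \<in> Proc I I" using compP[OF s e] .
  have "mmul (dm A) e s = xi I I (mmul (dm A) e s)" using xscal[OF P] by simp
  also have "\<dots> = mmul (Lam A) (xi A I e) (xi I A s)" using xcomp[OF s e] .
  finally show ?thesis .
qed

definition dat :: "'s \<Rightarrow> (nat \<times> nat \<times> nat) set \<Rightarrow> (nat \<times> nat \<times> nat \<Rightarrow> real) \<Rightarrow> (nat \<times> nat \<times> nat \<Rightarrow> rmat) \<Rightarrow> (nat \<times> nat \<times> nat \<Rightarrow> rmat) \<Rightarrow> bool" where
  "dat A K c S E \<longleftrightarrow> finite K \<and> (\<forall>x\<in>K. S x \<in> Proc I A \<and> E x \<in> Proc A I) \<and>
     idm (dm A) = (\<lambda>i j. \<Sum>x\<in>K. c x * (S x i 0 * E x 0 j)) \<and>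
     idm (Lam A) = (\<lambda>i j. \<Sum>x\<in>K. c x * (xi I A (S x) i 0 * xi A I (E x) 0 j))"

definition chi where "chi A K c S E = (\<lambda>i j. \<Sum>x\<in>K. c x * (xi I A (S x) i 0 * E x 0 j))"
definition phi where "phi A K c S E = (\<lambda>i j. \<Sum>x\<in>K. c x * (S x i 0 * xi A I (E x) 0 j))"

lemma chi_state:
  assumes D: "dat A K c S E" and s: "s \<in> Proc I A"
  shows "mmul (dm A) (chi A K c S E) s = xi I A s"
proof -
  have SE: "\<forall>x\<in>K. S x \<in> Proc I A \<and> E x \<in> Proc A I" and idL: "idm (Lam A) = (\<lambda>i j. \<Sum>x\<in>K. c x * (xi I A (S x) i 0 * xi A I (E x) 0 j))"
    using D unfolding dat_def by auto
  have "mmul (dm A) (chi A K c S E) s = (\<lambda>i j. \<Sum>x\<in>K. c x * (xi I A (S x) i 0 * mmul (dm A) (E x) s 0 j))"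
    unfolding chi_def by (rule R2)
  also have "\<dots> = (\<lambda>i j. \<Sum>x\<in>K. c x * (xi I A (S x) i 0 * mmul (Lam A) (xi A I (E x)) (xi I A s) 0 j))"
    by (intro ext sum.cong) (use SE scal_mat[OF s] in auto)
  also have "\<dots> = mmul (Lam A) (idm (Lam A)) (xi I A s)"
    unfolding idL by (rule R2[symmetric])
  also have "\<dots> = xi I A s" by (rule mmul_idm_left[OF xwf[OF s]])
  finally show ?thesis .
qed

lemma main_eq:
  assumes DA: "dat A K c S E" and DB: "dat B K' c' S' E'" and T: "T \<in> Proc A B"
  shows "xi A B T = mmul (dm B) (chi B K' c' S' E') (mmul (dm A) T (phi A K c S E))"
proof -
  have SE: "\<forall>x\<in>K. S x \<in> Proc I A \<and> E x \<in> Proc A I" and idL: "idm (Lam A) = (\<lambda>i j. \<Sum>x\<in>K. c x * (xi I A (S x) i 0 * xi A I (E x) 0 j))"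
    using DA unfolding dat_def by auto
  let ?X = "chi B K' c' S' E'"
  have st: "\<And>x. x \<in> K \<Longrightarrow> mmul (dm A) (mmul (dm B) ?X T) (S x) = mmul (Lam A) (xi A B T) (xi I A (S x))"
  proof -
    fix x assume x: "x \<in> K"
    have Sx: "S x \<in> Proc I A" using SE x by auto
    have TS: "mmul (dm A) T (S x) \<in> Proc I B" by (rule compP[OF Sx T])
    have "mmul (dm A) (mmul (dm B) ?X T) (S x) = mmul (dm B) ?X (mmul (dm A) T (S x))" by (rule mmul_assoc)
    also have "\<dots> = xi I B (mmul (dm A) T (S x))" by (rule chi_state[OF DB TS])
    also have "\<dots> = mmul (Lam A) (xi A B T) (xi I A (S x))" by (rule xcomp[OF Sx T])
    finally show "mmul (dm A) (mmul (dm B) ?X T) (S x) = mmul (Lam A) (xi A B T) (xi I A (S x))" .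
  qed
  have "mmul (dm B) ?X (mmul (dm A) T (phi A K c S E)) = mmul (dm A) (mmul (dm B) ?X T) (phi A K c S E)"
    by (rule mmul_assoc[symmetric])
  also have "\<dots> = (\<lambda>i j. \<Sum>x\<in>K. c x * (mmul (dm A) (mmul (dm B) ?X T) (S x) i 0 * xi A I (E x) 0 j))"
    unfolding phi_def by (rule R1)
  also have "\<dots> = (\<lambda>i j. \<Sum>x\<in>K. c x * (mmul (Lam A) (xi A B T) (xi I A (S x)) i 0 * xi A I (E x) 0 j))"
    by (intro ext sum.cong) (simp_all add: st)
  also have "\<dots> = mmul (Lam A) (xi A B T) (idm (Lam A))"
    unfolding idL by (rule R1[symmetric])
  also have "\<dots> = xi A B T" by (rule mmul_idm_right[OF xwf[OF T]])
  finally show ?thesis by simp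
qed

lemma ones_chi:
  assumes D: "dat A K c S E"
  shows "mmul (Lam A) (ones (Lam A)) (chi A K c S E) = u A"
proof -
  have SE: "\<forall>x\<in>K. S x \<in> Proc I A \<and> E x \<in> Proc A I" and idd: "idm (dm A) = (\<lambda>i j. \<Sum>x\<in>K. c x * (S x i 0 * E x 0 j))"
    using D unfolding dat_def by auto
  have "mmul (Lam A) (ones (Lam A)) (chi A K c S E) = (\<lambda>i j. \<Sum>x\<in>K. c x * (mmul (Lam A) (ones (Lam A)) (xi I A (S x)) i 0 * E x 0 j))"
    unfolding chi_def by (rule R1)
  also have "\<dots> = (\<lambda>i j. \<Sum>x\<in>K. c x * (mmul (dm A) (u A) (S x) i 0 * E x 0 j))"
    by (intro ext sum.cong) (use SE scal_mat[OF _ uP] xu in auto)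
  also have "\<dots> = mmul (dm A) (u A) (idm (dm A))"
    unfolding idd by (rule R1[symmetric])
  also have "\<dots> = u A" using mmul_idm_right wfP[OF uP] by blast
  finally show ?thesis .
qed

lemma chi_phi:
  assumes D: "dat A K c S E"
  shows "mmul (dm A) (chi A K c S E) (phi A K c S E) = idm (Lam A)"
proof -
  have SE: "\<forall>x\<in>K. S x \<in> Proc I A \<and> E x \<in> Proc A I" and idL: "idm (Lam A) = (\<lambda>i j. \<Sum>x\<in>K. c x * (xi I A (S x) i 0 * xi A I (E x) 0 j))"
    using D unfolding dat_def by auto
  have Ep: "\<And>x. x \<in> K \<Longrightarrow> mmul (dm A) (E x) (phi A K c S E) = xi A I (E x)"
  proof -
    fix x assume x: "x \<in> K"
    have Ex: "E x \<in> Proc A I" using SE x by auto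
    have "mmul (dm A) (E x) (phi A K c S E) = (\<lambda>i j. \<Sum>y\<in>K. c y * (mmul (dm A) (E x) (S y) i 0 * xi A I (E y) 0 j))"
      unfolding phi_def by (rule R1)
    also have "\<dots> = (\<lambda>i j. \<Sum>y\<in>K. c y * (mmul (Lam A) (xi A I (E x)) (xi I A (S y)) i 0 * xi A I (E y) 0 j))"
      by (intro ext sum.cong) (use SE scal_mat[OF _ Ex] in auto)
    also have "\<dots> = mmul (Lam A) (xi A I (E x)) (idm (Lam A))"
      unfolding idL by (rule R1[symmetric])
    also have "\<dots> = xi A I (E x)" using mmul_idm_right xwf[OF Ex] by blast
    finally show "mmul (dm A) (E x) (phi A K c S E) = xi A I (E x)" .
  qed
  have "mmul (dm A) (chi A K c S E) (phi A K c S E) = (\<lambda>i j. \<Sum>x\<in>K. c x * (xi I A (S x) i 0 * mmul (dm A) (E x) (phi A K c S E) 0 j))"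
    unfolding chi_def by (rule R2)
  also have "\<dots> = idm (Lam A)" unfolding idL by (intro ext sum.cong) (simp_all add: Ep)
  finally show ?thesis .
qed

lemma phi_chi:
  assumes D: "dat A K c S E"
  shows "mmul (Lam A) (phi A K c S E) (chi A K c S E) = idm (dm A)"
proof -
  have SE: "\<forall>x\<in>K. S x \<in> Proc I A \<and> E x \<in> Proc A I" and idd: "idm (dm A) = (\<lambda>i j. \<Sum>x\<in>K. c x * (S x i 0 * E x 0 j))"
    using D unfolding dat_def by auto
  have Ep: "\<And>x. x \<in> K \<Longrightarrow> mmul (Lam A) (xi A I (E x)) (chi A K c S E) = E x"
  proof -
    fix x assume x: "x \<in> K"
    have Ex: "E x \<in> Proc A I" using SE x by auto
    have "mmul (Lam A) (xi A I (E x)) (chi A K c S E) = (\<lambda>i j. \<Sum>y\<in>K. c y * (mmul (Lam A) (xi A I (E x)) (xi I A (S y)) i 0 * E y 0 j))"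
      unfolding chi_def by (rule R1)
    also have "\<dots> = (\<lambda>i j. \<Sum>y\<in>K. c y * (mmul (dm A) (E x) (S y) i 0 * E y 0 j))"
      by (intro ext sum.cong) (use SE scal_mat[OF _ Ex] in auto)
    also have "\<dots> = mmul (dm A) (E x) (idm (dm A))"
      unfolding idd by (rule R1[symmetric])
    also have "\<dots> = E x" using mmul_idm_right wfP[OF Ex] by blast
    finally show "mmul (Lam A) (xi A I (E x)) (chi A K c S E) = E x" .
  qed
  have "mmul (Lam A) (phi A K c S E) (chi A K c S E) = (\<lambda>i j. \<Sum>x\<in>K. c x * (S x i 0 * mmul (Lam A) (xi A I (E x)) (chi A K c S E) 0 j))"
    unfolding phi_def by (rule R2)
  also have "\<dots> = idm (dm A)" unfolding idd by (intro ext sum.cong) (simp_all add: Ep)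
  finally show ?thesis .
qed

lemma wf_chi:
  assumes D: "dat A K c S E"
  shows "wf_mat (Lam A) (dm A) (chi A K c S E)" and "wf_mat (dm A) (Lam A) (phi A K c S E)"
proof -
  have SE: "\<forall>x\<in>K. S x \<in> Proc I A \<and> E x \<in> Proc A I" using D unfolding dat_def by auto
  have a: "\<And>x i. x \<in> K \<Longrightarrow> Lam A \<le> i \<Longrightarrow> xi I A (S x) i 0 = 0"
    using SE xwf unfolding wf_mat_def by blast
  have b: "\<And>x j. x \<in> K \<Longrightarrow> dm A \<le> j \<Longrightarrow> E x 0 j = 0"
    using SE wfP unfolding wf_mat_def by blast
  have a2: "\<And>x i. x \<in> K \<Longrightarrow> dm A \<le> i \<Longrightarrow> S x i 0 = 0"
    using SE wfP unfolding wf_mat_def by blast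
  have b2: "\<And>x j. x \<in> K \<Longrightarrow> Lam A \<le> j \<Longrightarrow> xi A I (E x) 0 j = 0"
    using SE xwf unfolding wf_mat_def by blast
  show "wf_mat (Lam A) (dm A) (chi A K c S E)" unfolding wf_mat_def chi_def
    using a b by (auto intro!: sum.neutral)
  show "wf_mat (dm A) (Lam A) (phi A K c S E)" unfolding wf_mat_def phi_def
    using a2 b2 by (auto intro!: sum.neutral)
qed

lemma dim_eq:
  assumes D: "dat A K c S E"
  shows "Lam A = dm A"
proof -
  let ?X = "chi A K c S E" and ?P = "phi A K c S E"
  have e1: "\<And>i. (\<Sum>p<dm A. ?X i p * ?P p i) = idm (Lam A) i i"
    using fun_cong[OF fun_cong[OF chi_phi[OF D]]] unfolding mmul_def by blast
  have e2: "\<And>p. (\<Sum>i<Lam A. ?P p i * ?X i p) = idm (dm A) p p"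
    using fun_cong[OF fun_cong[OF phi_chi[OF D]]] unfolding mmul_def by blast
  have "real (Lam A) = (\<Sum>i<Lam A. idm (Lam A) i i)" by (simp add: idm_def)
  also have "\<dots> = (\<Sum>i<Lam A. \<Sum>p<dm A. ?X i p * ?P p i)"
    by (simp only: e1)
  also have "\<dots> = (\<Sum>p<dm A. \<Sum>i<Lam A. ?X i p * ?P p i)"
    by (rule sum.swap)
  also have "\<dots> = (\<Sum>p<dm A. \<Sum>i<Lam A. ?P p i * ?X i p)"
    by (simp only: mult.commute)
  also have "\<dots> = (\<Sum>p<dm A. idm (dm A) p p)"
    by (simp only: e2)
  also have "\<dots> = real (dm A)" by (simp add: idm_def)
  finally show ?thesis by simp
qed

lemma inv_eq:
  assumes D: "dat A K c S E"
  shows "invertible_m (Lam A) (dm A) (chi A K c S E)" and "inv_m (dm A) (chi A K c S E) = phi A K c S E"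
proof -
  let ?X = "chi A K c S E" and ?P = "phi A K c S E"
  define d where "d = dm A"
  have L: "Lam A = d" using dim_eq[OF D] d_def by simp
  have wX: "wf_mat d d ?X" and wP: "wf_mat d d ?P" using wf_chi[OF D] L d_def by auto
  have XP: "mmul d ?X ?P = idm d" using chi_phi[OF D] L d_def by simp
  have PX: "mmul d ?P ?X = idm d" using phi_chi[OF D] L d_def by simp
  have ex: "\<exists>N. wf_mat d d N \<and> mmul d ?X N = idm d \<and> mmul d N ?X = idm d" using wP XP PX by blast
  show "invertible_m (Lam A) (dm A) ?X" unfolding invertible_m_def using L wX ex d_def by simp
  have "wf_mat d d (inv_m d ?X) \<and> mmul d ?X (inv_m d ?X) = idm d \<and> mmul d (inv_m d ?X) ?X = idm d"
    unfolding inv_m_def by (rule someI_ex[OF ex])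
  then have N: "wf_mat d d (inv_m d ?X)" "mmul d (inv_m d ?X) ?X = idm d" by auto
  have "inv_m d ?X = mmul d (inv_m d ?X) (idm d)" using mmul_idm_right[OF N(1)] by simp
  also have "\<dots> = mmul d (inv_m d ?X) (mmul d ?X ?P)" using XP by simp
  also have "\<dots> = mmul d (mmul d (inv_m d ?X) ?X) ?P" by (rule mmul_assoc[symmetric])
  also have "\<dots> = ?P" using N(2) mmul_idm_left[OF wP] by simp
  finally show "inv_m (dm A) ?X = ?P" using d_def by simp
qed

lemma main:
  "\<exists>\<chi> :: 's \<Rightarrow> rmat.
           (\<forall>A. wf_mat (Lam A) (dm A) (\<chi> A) \<and> invertible_m (Lam A) (dm A) (\<chi> A) \<and>
                mmul (Lam A) (ones (Lam A)) (\<chi> A) = u A) \<and>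
           (\<forall>A B T. T \<in> Proc A B \<longrightarrow>
                xi A B T = mmul (dm B) (\<chi> B) (mmul (dm A) T (inv_m (dm A) (\<chi> A))))"
proof -
  define Q where "Q = (\<lambda>A t. dat A (fst t) (fst (snd t)) (fst (snd (snd t))) (snd (snd (snd t))))"
  have ex: "\<And>A. \<exists>t. Q A t"
  proof -
    fix A
    have "\<exists>K c S E. dat A K c S E" by (simp only: dat_def) (rule STEP1)
    then obtain K c S E where "dat A K c S E" by blast
    then show "\<exists>t. Q A t" unfolding Q_def by (intro exI[of _ "(K, c, S, E)"]) simp
  qed
  define KK where "KK = (\<lambda>A. fst (SOME t. Q A t))"
  define cc where "cc = (\<lambda>A. fst (snd (SOME t. Q A t)))"
  define SS where "SS = (\<lambda>A. fst (snd (snd (SOME t. Q A t))))"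
  define EE where "EE = (\<lambda>A. snd (snd (snd (SOME t. Q A t))))"
  have D: "\<And>A. dat A (KK A) (cc A) (SS A) (EE A)"
  proof -
    fix A
    have "Q A (SOME t. Q A t)" by (rule someI_ex[OF ex])
    then show "dat A (KK A) (cc A) (SS A) (EE A)" unfolding Q_def KK_def cc_def SS_def EE_def .
  qed
  define X where "X = (\<lambda>A. chi A (KK A) (cc A) (SS A) (EE A))"
  show ?thesis
  proof (rule exI[of _ X], intro conjI allI impI)
    fix A
    show "wf_mat (Lam A) (dm A) (X A)" unfolding X_def by (rule wf_chi(1)[OF D])
    show "invertible_m (Lam A) (dm A) (X A)" unfolding X_def by (rule inv_eq(1)[OF D])
    show "mmul (Lam A) (ones (Lam A)) (X A) = u A" unfolding X_def by (rule ones_chi[OF D])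
  next
    fix A B T assume T: "T \<in> Proc A B"
    show "xi A B T = mmul (dm B) (X B) (mmul (dm A) T (inv_m (dm A) (X A)))"
      unfolding X_def inv_eq(2)[OF D] by (rule main_eq[OF D D T])
  qed
qed

end

theorem proposition2:
  fixes tens :: "'s \<Rightarrow> 's \<Rightarrow> 's" and I :: 's and dm :: "'s \<Rightarrow> nat"
    and Proc :: "'s \<Rightarrow> 's \<Rightarrow> rmat set" and u :: "'s \<Rightarrow> rmat"
    and Lam :: "'s \<Rightarrow> nat" and xi :: "'s \<Rightarrow> 's \<Rightarrow> rmat \<Rightarrow> rmat"
  assumes "tl_gpt tens I dm Proc u"
    and "quasi_model tens I dm Proc u Lam xi"
  shows "\<exists>\<chi> :: 's \<Rightarrow> rmat.
           (\<forall>A. wf_mat (Lam A) (dm A) (\<chi> A) \<and> invertible_m (Lam A) (dm A) (\<chi> A) \<and>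
                mmul (Lam A) (ones (Lam A)) (\<chi> A) = u A) \<and>
           (\<forall>A B T. T \<in> Proc A B \<longrightarrow>
                xi A B T = mmul (dm B) (\<chi> B) (mmul (dm A) T (inv_m (dm A) (\<chi> A))))"
proof -
  interpret qm tens I dm Proc u Lam xi using assms by (rule qm.intro)
  show ?thesis by (rule main)
qed

end
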